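(* Let $d\ge 2$ and let $\{|\phi^a_x\rangle\}_{a=0}^{d-1}$, $x=0,\dots,d$, be a complete set of $d+1$ mutually unbiased bases of $\mathbb{C}^d$. Then for every function $\lambda:\{0,\dots,d\}\to\{0,\dots,d-1\}$, $$\Big\|\sum_{x=0}^{d}|\phi^{\lambda(x)}_x\rangle\langle\phi^{\lambda(x)}_x|\Big\|_\infty\le 1+\sqrt d .$$ Equivalently, the operators $F_{a|x}=\frac{1}{1+\sqrt d}|\phi^a_x\rangle\langle\phi^a_x|$ satisfy $F_{a|x}\ge 0$ and $\sum_{a,x}\delta_{a,\lambda(x)}F_{a|x}\le\mathbb{I}$ for every such $\lambda$. *)

theory Defs
  imports "HOL-Analysis.Analysis"
begin

definition cinner :: "complex ^ 'n \<Rightarrow> complex ^ 'n \<Rightarrow> complex" where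
  "cinner u v = (\<Sum>i\<in>UNIV. cnj (u $ i) * v $ i)"

definition outer :: "complex ^ 'n \<Rightarrow> complex ^ 'n ^ 'n" where
  "outer u = (\<chi> i j. u $ i * cnj (u $ j))"

definition opnorm :: "complex ^ 'n ^ 'n \<Rightarrow> real" where
  "opnorm A = onorm (\<lambda>v. A *v v)"

definition complete_MUBs :: "(nat \<Rightarrow> nat \<Rightarrow> complex ^ 'n) \<Rightarrow> bool" where
  "complete_MUBs phi \<longleftrightarrow>
     (\<forall>x\<le>CARD('n). \<forall>a<CARD('n). \<forall>b<CARD('n).
         cinner (phi x a) (phi x b) = (if a = b then 1 else 0)) \<and>
     (\<forall>x\<le>CARD('n). \<forall>y\<le>CARD('n). \<forall>a<CARD('n). \<forall>b<CARD('n).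
         x \<noteq> y \<longrightarrow> (cmod (cinner (phi x a) (phi y b)))\<^sup>2 = 1 / real CARD('n))"

end

theory Submission
  imports Defs
begin

lemma Av_comp:
  fixes u :: "nat \<Rightarrow> complex ^ 'n"
  assumes "finite X"
  shows "((\<Sum>x\<in>X. outer (u x)) *v v) $ i = (\<Sum>x\<in>X. u x $ i * cinner (u x) v)"
proof -
  have "((\<Sum>x\<in>X. outer (u x)) *v v) $ i = (\<Sum>j\<in>UNIV. (\<Sum>x\<in>X. u x $ i * cnj (u x $ j)) * v $ j)"
    by (simp add: matrix_vector_mult_def outer_def sum_component)
  also have "\<dots> = (\<Sum>x\<in>X. \<Sum>j\<in>UNIV. u x $ i * (cnj (u x $ j) * v $ j))"
    by (subst sum.swap) (simp add: sum_distrib_right mult.assoc)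
  also have "\<dots> = (\<Sum>x\<in>X. u x $ i * cinner (u x) v)"
    by (simp add: cinner_def sum_distrib_left)
  finally show ?thesis .
qed

lemma cinner_expand:
  fixes u :: "nat \<Rightarrow> complex ^ 'n"
  assumes "\<And>i. w $ i = (\<Sum>x\<in>X. u x $ i * c x)"
  shows "cinner w w = (\<Sum>x\<in>X. \<Sum>y\<in>X. cnj (c x) * c y * cinner (u x) (u y))"
proof -
  have "cinner w w = (\<Sum>i\<in>UNIV. (\<Sum>x\<in>X. cnj (u x $ i) * cnj (c x)) * (\<Sum>y\<in>X. u y $ i * c y))"
    by (simp add: cinner_def assms)
  also have "\<dots> = (\<Sum>i\<in>UNIV. \<Sum>x\<in>X. \<Sum>y\<in>X. cnj (c x) * c y * (cnj (u x $ i) * u y $ i))"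
    by (simp add: sum_distrib_left sum_distrib_right algebra_simps)
  also have "\<dots> = (\<Sum>x\<in>X. \<Sum>y\<in>X. \<Sum>i\<in>UNIV. cnj (c x) * c y * (cnj (u x $ i) * u y $ i))"
    by (subst sum.swap) (simp add: sum.swap[of _ UNIV])
  also have "\<dots> = (\<Sum>x\<in>X. \<Sum>y\<in>X. cnj (c x) * c y * cinner (u x) (u y))"
    by (simp add: cinner_def sum_distrib_left)
  finally show ?thesis .
qed

lemma cinner_vw:
  fixes u :: "nat \<Rightarrow> complex ^ 'n"
  assumes "\<And>i. w $ i = (\<Sum>x\<in>X. u x $ i * cinner (u x) v)"
  shows "Re (cinner v w) = (\<Sum>x\<in>X. (cmod (cinner (u x) v))\<^sup>2)"
proof -
  have "cinner v w = (\<Sum>i\<in>UNIV. \<Sum>x\<in>X. cnj (v $ i) * u x $ i * cinner (u x) v)"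
    by (simp add: cinner_def assms sum_distrib_left mult.assoc)
  also have "\<dots> = (\<Sum>x\<in>X. (\<Sum>i\<in>UNIV. cnj (v $ i) * u x $ i) * cinner (u x) v)"
    by (subst sum.swap) (simp add: sum_distrib_right)
  also have "\<dots> = (\<Sum>x\<in>X. cnj (cinner (u x) v) * cinner (u x) v)"
    by (simp add: cinner_def mult.commute)
  finally have "Re (cinner v w) = (\<Sum>x\<in>X. Re (cnj (cinner (u x) v) * cinner (u x) v))"
    by (simp add: Re_sum)
  also have "\<dots> = (\<Sum>x\<in>X. (cmod (cinner (u x) v))\<^sup>2)"
    by (rule sum.cong) (simp_all, metis cmod_power2 power2_eq_square)
  finally show ?thesis .
qed

lemma norm_sq_cinner:
  fixes w :: "complex ^ 'n"
  shows "(norm w)\<^sup>2 = Re (cinner w w)"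
proof -
  have "(norm w)\<^sup>2 = (\<Sum>i\<in>UNIV. (cmod (w $ i))\<^sup>2)"
    by (simp add: norm_vec_def L2_set_def sum_nonneg)
  also have "\<dots> = Re (cinner w w)"
    unfolding cinner_def Re_sum by (rule sum.cong) (simp_all, metis cmod_power2 power2_eq_square)
  finally show ?thesis .
qed

lemma re_cinner_le:
  fixes v w :: "complex ^ 'n"
  shows "Re (cinner v w) \<le> norm v * norm w"
proof -
  have "Re (cinner v w) = inner v w"
    by (simp add: cinner_def inner_vec_def inner_complex_def Re_sum)
  also have "\<dots> \<le> norm v * norm w" by (rule norm_cauchy_schwarz)
  finally show ?thesis .
qed

lemma term_bound:
  fixes c g :: complex and r :: real
  assumes "cmod g \<le> r"
  shows "Re (cnj c * d * g) \<le> r * ((cmod c)\<^sup>2 + (cmod d)\<^sup>2) / 2"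
proof -
  have "Re (cnj c * d * g) \<le> cmod (cnj c * d * g)" by (rule complex_Re_le_cmod)
  also have "\<dots> = cmod c * cmod d * cmod g" by (simp add: norm_mult)
  also have "\<dots> \<le> cmod c * cmod d * r" by (rule mult_left_mono[OF assms]) simp
  also have "cmod c * cmod d \<le> ((cmod c)\<^sup>2 + (cmod d)\<^sup>2) / 2"
    using sum_squares_bound[of "cmod c" "cmod d"] by simp
  hence "cmod c * cmod d * r \<le> ((cmod c)\<^sup>2 + (cmod d)\<^sup>2) / 2 * r"
    using assms norm_ge_zero[of g] by (intro mult_right_mono) linarith+
  finally show ?thesis by (simp add: mult.commute)
qed

lemma main_bound:
  fixes u :: "nat \<Rightarrow> complex ^ 'n"
  assumes fin: "finite X" and cX: "card X = m + 1" and r: "r \<ge> 0"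
    and diag: "\<forall>x\<in>X. cinner (u x) (u x) = 1"
    and off: "\<forall>x\<in>X. \<forall>y\<in>X. x \<noteq> y \<longrightarrow> cmod (cinner (u x) (u y)) \<le> r"
  shows "norm ((\<Sum>x\<in>X. outer (u x)) *v v) \<le> (1 + real m * r) * norm v"
proof -
  define w where "w = (\<Sum>x\<in>X. outer (u x)) *v v"
  define c where "c x = cinner (u x) v" for x
  define a where "a x = (cmod (c x))\<^sup>2" for x
  define S where "S = (\<Sum>x\<in>X. a x)"
  have hw: "\<And>i. w $ i = (\<Sum>x\<in>X. u x $ i * c x)"
    unfolding w_def c_def using Av_comp[OF fin] by blast
  have "(norm w)\<^sup>2 = (\<Sum>x\<in>X. \<Sum>y\<in>X. Re (cnj (c x) * c y * cinner (u x) (u y)))"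
    unfolding norm_sq_cinner cinner_expand[OF hw] by (simp add: Re_sum)
  also have "\<dots> \<le> (\<Sum>x\<in>X. \<Sum>y\<in>X. (if x = y then a x else r * (a x + a y) / 2))"
  proof (intro sum_mono)
    fix x y assume x: "x \<in> X" and y: "y \<in> X"
    show "Re (cnj (c x) * c y * cinner (u x) (u y)) \<le> (if x = y then a x else r * (a x + a y) / 2)"
    proof (cases "x = y")
      case True
      then show ?thesis using diag x unfolding a_def
        by (simp, metis cmod_power2 power2_eq_square order_refl)
    next
      case False
      then show ?thesis using term_bound[of "cinner (u x) (u y)" r "c x" "c y"] off x y
        unfolding a_def by simp
    qed
  qed
  also have "\<dots> = (\<Sum>x\<in>X. a x + r / 2 * (real m * a x + (S - a x)))"
  proof (rule sum.cong[OF refl])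
    fix x assume x: "x \<in> X"
    have "(\<Sum>y\<in>X. (if x = y then a x else r * (a x + a y) / 2))
        = a x + (\<Sum>y\<in>X - {x}. r * (a x + a y) / 2)"
      using fin x by (simp add: sum.remove[of X x] sum.If_cases Diff_eq Int_commute)
    also have "(\<Sum>y\<in>X - {x}. r * (a x + a y) / 2) = r / 2 * (\<Sum>y\<in>X - {x}. a x + a y)"
      by (simp add: sum_distrib_left)
    also have "(\<Sum>y\<in>X - {x}. a x + a y) = real m * a x + (S - a x)"
      using fin x cX unfolding S_def by (simp add: sum.distrib sum_diff1)
    finally show "(\<Sum>y\<in>X. (if x = y then a x else r * (a x + a y) / 2)) = a x + r / 2 * (real m * a x + (S - a x))" .
  qed
  also have "\<dots> = (\<Sum>x\<in>X. (1 + r / 2 * (real m - 1)) * a x + r / 2 * S)"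
    by (rule sum.cong) (simp_all add: field_simps)
  also have "\<dots> = (1 + r / 2 * (real m - 1)) * S + real (card X) * (r / 2 * S)"
    unfolding S_def by (simp add: sum.distrib sum_distrib_left)
  also have "\<dots> = S + r / 2 * (real m * S + (real (m + 1) * S - S))"
    using cX by (simp add: field_simps)
  also have "\<dots> = (1 + real m * r) * S" by (simp add: algebra_simps)
  also have "S = Re (cinner v w)"
    unfolding S_def a_def c_def by (rule cinner_vw[symmetric]) (use hw c_def in simp)
  also have "\<dots> \<le> norm v * norm w" by (rule re_cinner_le)
  finally have "(norm w)\<^sup>2 \<le> (1 + real m * r) * (norm v * norm w)"
    using r by (simp add: mult_left_mono)
  hence "norm w * norm w \<le> ((1 + real m * r) * norm v) * norm w"
    by (simp add: power2_eq_square algebra_simps)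
  hence "norm w \<le> (1 + real m * r) * norm v"
    by (cases "norm w = 0") (use r in simp, simp)
  thus ?thesis unfolding w_def .
qed

theorem mainTheorem2:
  fixes phi :: "nat \<Rightarrow> nat \<Rightarrow> complex ^ 'n" and lam :: "nat \<Rightarrow> nat"
  assumes "CARD('n) \<ge> 2"
    and "complete_MUBs phi"
    and "\<forall>x\<le>CARD('n). lam x < CARD('n)"
  shows "opnorm (\<Sum>x\<le>CARD('n). outer (phi x (lam x))) \<le> 1 + sqrt (real CARD('n))"
proof -
  define d where "d = CARD('n)"
  define u where "u x = phi x (lam x)" for x
  have dpos: "real d > 0" using assms(1) unfolding d_def by simp
  have diag: "\<forall>x\<in>{..d}. cinner (u x) (u x) = 1"
  proof
    fix x assume x: "x \<in> {..d}"
    have A: "\<forall>x\<le>d. \<forall>a<d. \<forall>b<d. cinner (phi x a) (phi x b) = (if a = b then 1 else 0)"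
      using assms(2) unfolding complete_MUBs_def d_def by blast
    have "lam x < d" using assms(3) x unfolding d_def by auto
    thus "cinner (u x) (u x) = 1" using A x unfolding u_def by simp
  qed
  have off: "\<forall>x\<in>{..d}. \<forall>y\<in>{..d}. x \<noteq> y \<longrightarrow> cmod (cinner (u x) (u y)) \<le> 1 / sqrt (real d)"
  proof (intro ballI impI)
    fix x y assume x: "x \<in> {..d}" and y: "y \<in> {..d}" and xy: "x \<noteq> y"
    have "(cmod (cinner (u x) (u y)))\<^sup>2 = 1 / real d"
    proof -
      have A: "\<forall>x\<le>d. \<forall>y\<le>d. \<forall>a<d. \<forall>b<d. x \<noteq> y \<longrightarrow> (cmod (cinner (phi x a) (phi y b)))\<^sup>2 = 1 / real d"
        using assms(2) unfolding complete_MUBs_def d_def by blast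
      have "lam x < d" "lam y < d" using assms(3) x y unfolding d_def by auto
      thus ?thesis using A x y xy unfolding u_def by simp
    qed
    hence "sqrt ((cmod (cinner (u x) (u y)))\<^sup>2) = sqrt (1 / real d)" by (rule arg_cong)
    hence "cmod (cinner (u x) (u y)) = sqrt (1 / real d)" by (simp only: real_sqrt_abs abs_norm_cancel)
    thus "cmod (cinner (u x) (u y)) \<le> 1 / sqrt (real d)" by (simp add: real_sqrt_divide)
  qed
  have eq: "real d * (1 / sqrt (real d)) = sqrt (real d)"
    using dpos by (simp add: real_div_sqrt)
  have "\<And>v. norm ((\<Sum>x\<in>{..d}. outer (u x)) *v v) \<le> (1 + sqrt (real d)) * norm v"
    using main_bound[of "{..d}" d "1 / sqrt (real d)" u, OF _ _ _ diag off] eq by simp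
  hence "onorm (\<lambda>v. (\<Sum>x\<in>{..d}. outer (u x)) *v v) \<le> 1 + sqrt (real d)"
    by (rule onorm_le)
  thus ?thesis unfolding opnorm_def u_def d_def atMost_def .
qed

end
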